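(* Let $b\in\mathbb N$ with $b\ge2d$, $\epsilon>0$, and let $g:(0,\infty)\to(0,\infty)$ be decreasing to zero. Fix an environment $\boldsymbol w$ such that for all $n$ large enough: (1) for all $z\in B_{n+b}$ the edge set $\mathfrak E(B_b(z))$ contains at most $3d-1$ edges with conductance $\le g(n^{1-\epsilon})$; and (2) the graph of edges with conductance $>g(n^{1-\epsilon})$ has a unique infinite connected component $\mathscr D_n$. Then for $n$ large enough the set $\mathscr I_n=B_n\setminus\mathscr D_n$ is $b$-sparse.
   Context: Lattice $\mathbb Z^d$, $d\ge2$, with nearest-neighbour edges $\mathfrak E_d$ and positive conductances $(w_e)_{e\in\mathfrak E_d}$. $B_n=[-n,n]^d\cap\mathbb Z^d$ and $B_m(z)=\{x\in\mathbb Z^d:|x-z|_\infty\le m\}$. $\mathfrak E(A)=\{\{x,x+\boldsymbol e_j\}: x\in A,\ j\in\{1,\dots,d\}\}$. An edge is called open at level $n$ if its conductance exceeds $g(n^{1-\epsilon})$; $\mathscr D_n$ is the infinite open cluster (sites) of this environment. A set $\mathscr I\subset\mathbb Z^d$ is $b$-sparse if every box $B_b(z)$, $z\in\mathbb Z^d$, contains at most one site of $\mathscr I$. *)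

theory Defs
  imports "HOL-Analysis.Analysis"
begin

type_synonym 'd site = "int ^ 'd"

definition box :: "nat \<Rightarrow> 'd::finite site \<Rightarrow> 'd site set" where
  "box m z = {x. \<forall>i. \<bar>x $ i - z $ i\<bar> \<le> int m}"

definition unitv :: "'d::finite \<Rightarrow> 'd site" where
  "unitv j = (\<chi> i. if i = j then 1 else 0)"

definition nn_edges :: "'d::finite site set set" where
  "nn_edges = {{x, x + unitv j} | x j. True}"

definition edges_of :: "'d::finite site set \<Rightarrow> 'd site set set" where
  "edges_of A = {{x, x + unitv j} | x j. x \<in> A}"

definition open_edge :: "('d::finite site set \<Rightarrow> real) \<Rightarrow> (real \<Rightarrow> real) \<Rightarrow> real \<Rightarrow> nat \<Rightarrow> 'd site set \<Rightarrow> bool" where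
  "open_edge w g eps n e \<longleftrightarrow> e \<in> nn_edges \<and> w e > g (real n powr (1 - eps))"

definition open_adj :: "('d::finite site set \<Rightarrow> real) \<Rightarrow> (real \<Rightarrow> real) \<Rightarrow> real \<Rightarrow> nat \<Rightarrow> ('d site \<times> 'd site) set" where
  "open_adj w g eps n = {(x, y). open_edge w g eps n {x, y}}"

definition cluster :: "('d::finite site set \<Rightarrow> real) \<Rightarrow> (real \<Rightarrow> real) \<Rightarrow> real \<Rightarrow> nat \<Rightarrow> 'd site \<Rightarrow> 'd site set" where
  "cluster w g eps n x = {y. (x, y) \<in> (open_adj w g eps n)\<^sup>*}"

definition infinite_clusters :: "('d::finite site set \<Rightarrow> real) \<Rightarrow> (real \<Rightarrow> real) \<Rightarrow> real \<Rightarrow> nat \<Rightarrow> 'd site set set" where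
  "infinite_clusters w g eps n = {C. (\<exists>x. C = cluster w g eps n x) \<and> infinite C}"

definition Dcl :: "('d::finite site set \<Rightarrow> real) \<Rightarrow> (real \<Rightarrow> real) \<Rightarrow> real \<Rightarrow> nat \<Rightarrow> 'd site set" where
  "Dcl w g eps n = (THE C. C \<in> infinite_clusters w g eps n)"

definition sparse :: "nat \<Rightarrow> 'd::finite site set \<Rightarrow> bool" where
  "sparse b I \<longleftrightarrow> (\<forall>z. card (box b z \<inter> I) \<le> 1)"

end

theory Submission
  imports Defs
begin



lemma unitv_comp[simp]: "unitv j $ i = (if i = j then 1 else 0)"
  by (simp add: unitv_def)

lemma edge_repr:
  assumes "{p, p + unitv j} = {q, q + unitv (k::'d::finite)}"
  shows "p = q \<and> j = k"
proof -
  have "(p = q \<and> p + unitv j = q + unitv k) \<or> (p = q + unitv k \<and> p + unitv j = q)"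
    using assms by (auto simp: doubleton_eq_iff)
  then show ?thesis
  proof
    assume h: "p = q \<and> p + unitv j = q + unitv k"
    then have "unitv j = unitv k" by (metis add_left_cancel)
    then have "unitv j $ j = unitv k $ j" by simp
    then have "j = k" by (simp split: if_splits)
    with h show ?thesis by simp
  next
    assume h: "p = q + unitv k \<and> p + unitv j = q"
    then have "unitv k + unitv j = (0::'d site)" by (metis add.assoc add_cancel_right_right)
    then have "(unitv k + unitv j) $ j = (0::'d site) $ j" by simp
    then show ?thesis by (simp split: if_splits)
  qed
qed

lemma nn_decode:
  assumes "{y, y'} \<in> (nn_edges :: 'd::finite site set set)"
  shows "\<exists>j. y' = y + unitv j \<or> y = y' + unitv j"
proof -
  obtain p j where "{y, y'} = {p, p + unitv j}" using assms by (auto simp: nn_edges_def)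
  then have "(y = p \<and> y' = p + unitv j) \<or> (y = p + unitv j \<and> y' = p)"
    by (auto simp: doubleton_eq_iff)
  then show ?thesis by blast
qed

lemma in_box: "y \<in> box m z \<longleftrightarrow> (\<forall>i. \<bar>y $ i - z $ i\<bar> \<le> int m)"
  by (simp add: box_def)

lemma finite_box: "finite (box m (z::'d::finite site))"
proof -
  have "box m z \<subseteq> (\<lambda>f. \<chi> i. f i) ` (Pi\<^sub>E UNIV (\<lambda>i. {z$i - int m .. z$i + int m}))"
  proof
    fix y assume "y \<in> box m z"
    then have h: "\<bar>y$i - z$i\<bar> \<le> int m" for i by (simp add: box_def)
    have "z$i - int m \<le> y$i \<and> y$i \<le> z$i + int m" for i using h[of i] by arith
    hence "(\<lambda>i. y $ i) \<in> Pi\<^sub>E UNIV (\<lambda>i. {z$i - int m .. z$i + int m})"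
      by (auto simp: PiE_def extensional_def)
    then show "y \<in> (\<lambda>f. \<chi> i. f i) ` (Pi\<^sub>E UNIV (\<lambda>i. {z$i - int m .. z$i + int m}))"
      by (rule rev_image_eqI) simp
  qed
  then show ?thesis by (rule finite_subset) (intro finite_imageI finite_PiE, auto)
qed

lemma finite_edges_box: "finite (edges_of (box m (z::'d::finite site)))"
proof -
  have "edges_of (box m z) = (\<lambda>(x,j). {x, x + unitv j}) ` (box m z \<times> UNIV)"
    by (auto simp: edges_of_def)
  moreover have "finite (box m z \<times> (UNIV::'d set))" by (simp add: finite_box)
  ultimately show ?thesis by simp
qed

definition vupd :: "'d::finite site \<Rightarrow> 'd \<Rightarrow> int \<Rightarrow> 'd site" where
  "vupd r c v = (\<chi> j. if j = c then v else r $ j)"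

lemma vupd_comp[simp]: "vupd r c v $ j = (if j = c then v else r $ j)"
  by (simp add: vupd_def)

definition onl :: "'d::finite \<Rightarrow> 'd site \<Rightarrow> 'd site \<Rightarrow> bool" where
  "onl i p y \<longleftrightarrow> (\<forall>j. j \<noteq> i \<longrightarrow> y $ j = p $ j)"




locale lat =
  fixes op :: "'d::finite site set \<Rightarrow> bool" and b :: nat
  assumes op_nn: "op e \<Longrightarrow> e \<in> nn_edges"
    and d2: "CARD('d) \<ge> 2" and bge: "b \<ge> 2 * CARD('d)"
begin

definition R :: "('d site \<times> 'd site) set" where "R = {(x,y). op {x,y}}"

abbreviation conn where "conn x y \<equiv> (x,y) \<in> R\<^sup>*"

lemma R_sym: "(x,y) \<in> R \<Longrightarrow> (y,x) \<in> R" by (simp add: R_def insert_commute)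

lemma conn_sym: assumes "conn x y" shows "conn y x"
proof -
  have "sym R" using R_sym by (auto intro: symI)
  then have "sym (R\<^sup>*)" by (rule sym_rtrancl)
  then show ?thesis using assms by (auto dest: symD)
qed

lemma conn_trans: "conn x y \<Longrightarrow> conn y u \<Longrightarrow> conn x u" by (rule rtrancl_trans)

lemma conn_edge: "op {y, y'} \<Longrightarrow> conn y y'" by (auto simp: R_def)
lemma conn_edge': "op {y, y'} \<Longrightarrow> conn y' y" by (auto simp: R_def insert_commute)

definition M where "M = 3 * CARD('d) - 1"
definition sp where "sp z \<longleftrightarrow> card {e \<in> edges_of (box b z). \<not> op e} \<le> M"
definition good where "good z i p \<longleftrightarrow> (\<forall>y. y \<in> box b z \<longrightarrow> y + unitv i \<in> box b z \<longrightarrow> onl i p y \<longrightarrow> op {y, y + unitv i})"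

lemma CL:
  assumes "sp z" "finite A" "inj_on h A"
    "\<And>a. a \<in> A \<Longrightarrow> fst (h a) \<in> box b z \<and> \<not> op {fst (h a), fst (h a) + unitv (snd (h a))}"
  shows "card A \<le> M"
proof -
  define E where "E a = {fst (h a), fst (h a) + unitv (snd (h a))}" for a
  have "inj_on E A"
  proof (rule inj_onI)
    fix a a' assume a: "a \<in> A" "a' \<in> A" "E a = E a'"
    then have "fst (h a) = fst (h a') \<and> snd (h a) = snd (h a')"
      using edge_repr[of "fst (h a)" "snd (h a)" "fst (h a')" "snd (h a')"] unfolding E_def by blast
    then have "h a = h a'" by (simp add: prod_eq_iff)
    then show "a = a'" using assms(3) a by (simp add: inj_on_def)
  qed
  have sub: "E ` A \<subseteq> {e \<in> edges_of (box b z). \<not> op e}" using assms(4) by (auto simp: E_def edges_of_def)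
  have "card A = card (E ` A)" using \<open>inj_on E A\<close> by (simp add: card_image)
  also have "\<dots> \<le> card {e \<in> edges_of (box b z). \<not> op e}"
    by (rule card_mono) (rule finite_subset[OF _ finite_edges_box[of b z]], auto simp: sub)
  also have "\<dots> \<le> M" using assms(1) by (simp add: sp_def)
  finally show ?thesis .
qed

lemma GL:
  assumes "sp z" "finite A" "card A > M"
    and disj: "\<And>a a' i q q' y. a \<in> A \<Longrightarrow> a' \<in> A \<Longrightarrow> (i,q) \<in> F a \<Longrightarrow> (i,q') \<in> F a'
                 \<Longrightarrow> onl i q y \<Longrightarrow> onl i q' y \<Longrightarrow> a = a'"
  shows "\<exists>a\<in>A. \<forall>(i,q)\<in>F a. good z i q"
proof (rule ccontr)
  assume nt: "\<not> ?thesis"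
  have "\<exists>yi. \<exists>q. (snd yi, q) \<in> F a \<and> onl (snd yi) q (fst yi) \<and> fst yi \<in> box b z
          \<and> \<not> op {fst yi, fst yi + unitv (snd yi)}" if "a \<in> A" for a
  proof -
    have "\<exists>x\<in>F a. \<not> (case x of (i,q) \<Rightarrow> good z i q)" using nt that by blast
    then obtain i q where iq: "(i,q) \<in> F a" "\<not> good z i q" by (metis case_prod_conv surj_pair)
    then obtain y where "y \<in> box b z" "onl i q y" "\<not> op {y, y+unitv i}" by (auto simp: good_def)
    then show ?thesis using iq by (intro exI[of _ "(y,i)"]) auto
  qed
  then obtain h where h: "\<And>a. a \<in> A \<Longrightarrow> \<exists>q. (snd (h a), q) \<in> F a \<and> onl (snd (h a)) q (fst (h a))
      \<and> fst (h a) \<in> box b z \<and> \<not> op {fst (h a), fst (h a) + unitv (snd (h a))}"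
    by metis
  have "inj_on h A"
  proof (rule inj_onI)
    fix a a' assume a: "a \<in> A" "a' \<in> A" "h a = h a'"
    obtain q where q: "(snd (h a), q) \<in> F a" "onl (snd (h a)) q (fst (h a))" using h a by blast
    obtain q' where q': "(snd (h a'), q') \<in> F a'" "onl (snd (h a')) q' (fst (h a'))" using h a by blast
    show "a = a'" using disj[OF a(1) a(2) q(1) _ q(2)] q' a(3) by auto
  qed
  then have "card A \<le> M" using CL[OF assms(1,2)] h by blast
  then show False using assms(3) by simp
qed

lemma onl_refl[simp]: "onl i p p" by (simp add: onl_def)

lemma good_cong: "(\<And>j. j \<noteq> i \<Longrightarrow> p $ j = p' $ j) \<Longrightarrow> good z i p = good z i p'"
  by (simp add: good_def onl_def)

lemma GC:
  assumes g: "good z i p" and p: "p \<in> box b z" and y: "y \<in> box b z" and l: "onl i p y"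
  shows "conn p y"
proof -
  have up: "\<forall>y. y \<in> box b z \<longrightarrow> onl i p y \<longrightarrow> y$i = p$i + int m \<longrightarrow> conn p y" for m
  proof (induction m)
    case 0
    show ?case
    proof (intro allI impI)
      fix y assume "y \<in> box b z" "onl i p y" "y$i = p$i + int 0"
      then have "y = p" unfolding onl_def vec_eq_iff by (metis add_0_right of_nat_0)
      then show "conn p y" by simp
    qed
  next
    case (Suc m)
    show ?case
    proof (intro allI impI)
      fix y assume y: "y \<in> box b z" "onl i p y" "y$i = p$i + int (Suc m)"
      define y' where "y' = y - unitv i"
      have "y' \<in> box b z" unfolding in_box
      proof
        fix j
        have h1: "\<bar>y$j - z$j\<bar> \<le> int b" "\<bar>p$j - z$j\<bar> \<le> int b" using y(1) p by (auto simp: in_box)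
        show "\<bar>y' $ j - z $ j\<bar> \<le> int b"
        proof (cases "j = i")
          case True
          then show ?thesis using h1 y(3) by (simp add: y'_def)
        next
          case False
          then show ?thesis using h1 by (simp add: y'_def)
        qed
      qed
      moreover have "onl i p y'" using y(2) by (simp add: onl_def y'_def)
      moreover have "y'$i = p$i + int m" using y(3) by (simp add: y'_def)
      ultimately have "conn p y'" using Suc.IH by blast
      moreover have "op {y', y' + unitv i}"
        using g \<open>y' \<in> box b z\<close> \<open>onl i p y'\<close> y(1) unfolding good_def by (metis y'_def diff_add_cancel)
      ultimately show "conn p y" using conn_trans conn_edge by (metis y'_def diff_add_cancel)
    qed
  qed
  have down: "\<forall>y. y \<in> box b z \<longrightarrow> onl i p y \<longrightarrow> y$i = p$i - int m \<longrightarrow> conn p y" for m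
  proof (induction m)
    case 0
    show ?case
    proof (intro allI impI)
      fix y assume "y \<in> box b z" "onl i p y" "y$i = p$i - int 0"
      then have "y = p" unfolding onl_def vec_eq_iff by (metis diff_0_right of_nat_0)
      then show "conn p y" by simp
    qed
  next
    case (Suc m)
    show ?case
    proof (intro allI impI)
      fix y assume y: "y \<in> box b z" "onl i p y" "y$i = p$i - int (Suc m)"
      define y' where "y' = y + unitv i"
      have "y' \<in> box b z" unfolding in_box
      proof
        fix j
        have h1: "\<bar>y$j - z$j\<bar> \<le> int b" "\<bar>p$j - z$j\<bar> \<le> int b" using y(1) p by (auto simp: in_box)
        show "\<bar>y' $ j - z $ j\<bar> \<le> int b"
        proof (cases "j = i")
          case True
          then show ?thesis using h1 y(3) by (simp add: y'_def)
        next
          case False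
          then show ?thesis using h1 by (simp add: y'_def)
        qed
      qed
      moreover have "onl i p y'" using y(2) by (simp add: onl_def y'_def)
      moreover have "y'$i = p$i - int m" using y(3) by (simp add: y'_def)
      ultimately have "conn p y'" using Suc.IH by blast
      moreover have "op {y, y + unitv i}"
        using g \<open>y' \<in> box b z\<close> y by (simp add: good_def y'_def onl_def)
      ultimately show "conn p y" using conn_trans conn_edge' by (metis y'_def)
    qed
  qed
  show ?thesis
  proof (cases "y$i \<ge> p$i")
    case True
    then have "y$i = p$i + int (nat (y$i - p$i))" by simp
    then show ?thesis using up y l by blast
  next
    case False
    then have "y$i = p$i - int (nat (p$i - y$i))" by simp
    then show ?thesis using down y l by blast
  qed
qed

end



context lat begin

lemma card_range: "card {c - int b .. c + int b} = 2*b+1"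
  by simp

lemma M_lt: "M < 2*b+1" using bge unfolding M_def by linarith

lemma fin_range: "finite {c - int b .. c + int b}" by simp

lemma vupd_box: "r \<in> box m z \<Longrightarrow> \<bar>v - z$c\<bar> \<le> int m \<Longrightarrow> vupd r c v \<in> box m z"
  by (simp add: in_box)

lemma box_comp: "y \<in> box m z \<Longrightarrow> \<bar>y$j - z$j\<bar> \<le> int m"
  by (simp add: in_box)

lemma range_iff: "v \<in> {c - int b .. c + int b} \<longleftrightarrow> \<bar>v - c\<bar> \<le> int b"
  by auto

lemma other_dir: "\<exists>k::'d. k \<noteq> i"
proof (rule ccontr)
  assume "\<not> ?thesis"
  then have "UNIV = {i}" by auto
  then have "CARD('d) = card {i}" by (simp only:)
  then have "CARD('d) = 1" by simp
  then show False using d2 by simp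
qed

lemma cross_step:
  assumes sp: "sp z" and ci: "c \<noteq> i" and g1: "good z i r" and g2: "good z i (vupd r c v)"
    and r: "r \<in> box b z" and r': "vupd r c v \<in> box b z"
  shows "conn r (vupd r c v)"
proof -
  let ?A = "{z$i - int b .. z$i + int b}"
  have "\<exists>\<beta>\<in>?A. \<forall>(j,q)\<in>{(c, vupd r i \<beta>)}. good z j q"
  proof (rule GL[OF sp fin_range, where F="\<lambda>\<beta>. {(c, vupd r i \<beta>)}"])
    show "M < card ?A" using M_lt card_range by (simp only:)
  next
    fix a a' j q q' y
    assume h: "(j,q) \<in> {(c, vupd r i a)}" "(j,q') \<in> {(c, vupd r i a')}" "onl j q y" "onl j q' y"
    then have e: "j = c" "q = vupd r i a" "q' = vupd r i a'" by auto
    have "y$i = q$i" "y$i = q'$i" using h(3,4) ci unfolding e onl_def by metis+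
    then show "a = a'" using e by simp
  qed
  then obtain \<beta> where \<beta>: "\<beta> \<in> ?A" "good z c (vupd r i \<beta>)" by auto
  have v: "\<bar>v - z$c\<bar> \<le> int b" using box_comp[OF r', of c] by simp
  have b1: "vupd r i \<beta> \<in> box b z" by (rule vupd_box[OF r]) (use \<beta>(1) in auto)
  have b2: "vupd (vupd r c v) i \<beta> \<in> box b z" by (rule vupd_box[OF r']) (use \<beta>(1) in auto)
  have "conn r (vupd r i \<beta>)" using GC[OF g1 r b1] by (simp add: onl_def)
  moreover have "conn (vupd r i \<beta>) (vupd (vupd r c v) i \<beta>)"
    using GC[OF \<beta>(2) b1 b2] by (simp add: onl_def)
  moreover have "conn (vupd r c v) (vupd (vupd r c v) i \<beta>)"
    using GC[OF g2 r' b2] by (simp add: onl_def)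
  ultimately show ?thesis using conn_trans conn_sym by blast
qed

lemma L2same:
  assumes sp: "sp z" and gp: "good z i p" and gq: "good z i q"
    and p: "p \<in> box b z" and q: "q \<in> box b z"
  shows "conn p q"
proof -
  obtain k where ki: "k \<noteq> i" using other_dir by blast
  define U where "U = UNIV - {i,k}"
  define L where "L S \<alpha> = (\<chi> j. if j = k then \<alpha> else if j \<in> S then q$j else p$j)" for S \<alpha>
  have Lc: "L S \<alpha> $ j = (if j = k then \<alpha> else if j \<in> S then q$j else p$j)" for S \<alpha> j
    by (simp add: L_def)
  let ?A = "{z$k - int b .. z$k + int b}"
  have "\<exists>\<alpha>\<in>?A. \<forall>(j,r)\<in>{(i, L S \<alpha>) | S. S \<subseteq> U}. good z j r"
  proof (rule GL[OF sp fin_range, where F="\<lambda>\<alpha>. {(i, L S \<alpha>) | S. S \<subseteq> U}"])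
    show "M < card ?A" using M_lt card_range by (simp only:)
  next
    fix a a' j r r' y
    assume h: "(j,r) \<in> {(i, L S a) | S. S \<subseteq> U}" "(j,r') \<in> {(i, L S a') | S. S \<subseteq> U}" "onl j r y" "onl j r' y"
    then obtain S S' where e: "j = i" "r = L S a" "r' = L S' a'" by auto
    have "y$k = r$k" "y$k = r'$k" using h(3,4) ki unfolding e onl_def by metis+
    then show "a = a'" using e by (simp add: Lc)
  qed
  then obtain \<alpha> where \<alpha>: "\<alpha> \<in> ?A" "\<And>S. S \<subseteq> U \<Longrightarrow> good z i (L S \<alpha>)" by blast
  have Lbox: "L S \<alpha> \<in> box b z" for S
    unfolding in_box Lc using \<alpha>(1) box_comp[OF p] box_comp[OF q] by auto
  have chain: "S \<subseteq> U \<Longrightarrow> conn p (L S \<alpha>)" for S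
  proof (induction S rule: infinite_finite_induct)
    case (infinite A)
    then show ?case by simp
  next
    case empty
    have e: "L {} \<alpha> = vupd p k \<alpha>" by (simp add: vec_eq_iff Lc)
    show ?case unfolding e
      by (rule cross_step[OF sp ki gp]) (use \<alpha>(2)[of "{}"] Lbox[of "{}"] p in \<open>simp_all add: e\<close>)
  next
    case (insert c S)
    have ci: "c \<noteq> i" "c \<noteq> k" using insert.prems by (auto simp: U_def)
    have e: "L (insert c S) \<alpha> = vupd (L S \<alpha>) c (q$c)" using ci by (simp add: vec_eq_iff Lc)
    have "conn (L S \<alpha>) (L (insert c S) \<alpha>)" unfolding e
      by (rule cross_step[OF sp ci(1) \<alpha>(2)]) (use insert.prems \<alpha>(2)[of "insert c S"] Lbox[of "insert c S"] Lbox[of S] in \<open>simp_all add: e\<close>)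
    then show ?case using insert conn_trans by blast
  qed
  define q0 where "q0 = vupd q i (p$i)"
  have q0b: "q0 \<in> box b z" unfolding q0_def using p q by (intro vupd_box) (auto simp: box_comp)
  have e: "q0 = vupd (L U \<alpha>) k (q$k)" using ki by (auto simp: vec_eq_iff Lc q0_def U_def)
  have gq0: "good z i q0" using gq by (subst good_cong[of i q0 q]) (auto simp: q0_def)
  have "conn (L U \<alpha>) q0" unfolding e
    by (rule cross_step[OF sp ki \<alpha>(2)]) (use gq0 Lbox[of U] q0b in \<open>simp_all add: e[symmetric]\<close>)
  moreover have "conn q q0" using GC[OF gq q q0b] by (simp add: onl_def q0_def)
  ultimately show ?thesis using chain[of U] conn_trans conn_sym by blast
qed

lemma L2:
  assumes sp: "sp z" and gp: "good z i p" and gq: "good z j q"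
    and p: "p \<in> box b z" and q: "q \<in> box b z"
  shows "conn p q"
proof (cases "i = j")
  case True
  then show ?thesis using L2same assms by blast
next
  case False
  let ?A = "{z$i - int b .. z$i + int b}"
  have "\<exists>\<beta>\<in>?A. \<forall>(j',r)\<in>{(j, vupd p i \<beta>)}. good z j' r"
  proof (rule GL[OF sp fin_range, where F="\<lambda>\<beta>. {(j, vupd p i \<beta>)}"])
    show "M < card ?A" using M_lt card_range by (simp only:)
  next
    fix a a' j' r r' y
    assume h: "(j',r) \<in> {(j, vupd p i a)}" "(j',r') \<in> {(j, vupd p i a')}" "onl j' r y" "onl j' r' y"
    then have e: "j' = j" "r = vupd p i a" "r' = vupd p i a'" by auto
    have "y$i = r$i" "y$i = r'$i" using h(3,4) False unfolding e onl_def by metis+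
    then show "a = a'" using e by simp
  qed
  then obtain \<beta> where \<beta>: "\<beta> \<in> ?A" "good z j (vupd p i \<beta>)" by auto
  have b1: "vupd p i \<beta> \<in> box b z" by (rule vupd_box[OF p]) (use \<beta>(1) in auto)
  have "conn p (vupd p i \<beta>)" using GC[OF gp p b1] by (simp add: onl_def)
  moreover have "conn (vupd p i \<beta>) q" using L2same[OF sp \<beta>(2) gq b1 q] .
  ultimately show ?thesis using conn_trans by blast
qed

end



context lat begin

lemma b4: "b \<ge> 4" using bge d2 by linarith

lemma M_lt2: "M < 2*b" using bge d2 unfolding M_def by linarith

lemma L3:
  assumes sp: "sp z" and z': "z' = vupd z j (z$j + 1)"
  shows "\<exists>i q. good z i q \<and> good z' i q \<and> q \<in> box b z \<and> q \<in> box b z'"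
proof -
  obtain i where ij: "i \<noteq> j" using other_dir by blast
  let ?A = "{z$j - int b + 1 .. z$j + int b}"
  have cA: "card ?A = 2*b" by simp
  have "\<exists>\<beta>\<in>?A. \<forall>(i',r)\<in>{(i, vupd z j \<beta>)}. good z i' r"
  proof (rule GL[OF sp _ _, where F="\<lambda>\<beta>. {(i, vupd z j \<beta>)}"])
    show "finite ?A" by simp
    show "M < card ?A" using M_lt2 cA by (simp only:)
  next
    fix a a' i' r r' y
    assume h: "(i',r) \<in> {(i, vupd z j a)}" "(i',r') \<in> {(i, vupd z j a')}" "onl i' r y" "onl i' r' y"
    then have e: "i' = i" "r = vupd z j a" "r' = vupd z j a'" by auto
    have "y$j = r$j" "y$j = r'$j" using h(3,4) ij unfolding e onl_def by metis+
    then show "a = a'" using e by simp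
  qed
  then obtain \<beta> where \<beta>: "\<beta> \<in> ?A" "good z i (vupd z j \<beta>)" by auto
  let ?q = "vupd z j \<beta>"
  have qb: "?q \<in> box b z" "?q \<in> box b z'" using \<beta>(1) unfolding in_box z' by auto
  have "good z' i ?q"
    unfolding good_def
  proof (intro allI impI)
    fix y assume y: "y \<in> box b z'" "y + unitv i \<in> box b z'" "onl i ?q y"
    have yj: "y$j = \<beta>" using y(3) ij unfolding onl_def by (metis vupd_comp)
    have zz: "z'$k = z$k" if "k \<noteq> j" for k using that by (simp add: z')
    have "y \<in> box b z" unfolding in_box
    proof
      fix k show "\<bar>y$k - z$k\<bar> \<le> int b"
      proof (cases "k = j")
        case True then show ?thesis using yj \<beta>(1) by auto
      next
        case False then show ?thesis using box_comp[OF y(1), of k] zz by simp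
      qed
    qed
    moreover have "y + unitv i \<in> box b z" unfolding in_box
    proof
      fix k show "\<bar>(y + unitv i)$k - z$k\<bar> \<le> int b"
      proof (cases "k = j")
        case True then show ?thesis using yj \<beta>(1) ij by auto
      next
        case False then show ?thesis using box_comp[OF y(2), of k] zz by simp
      qed
    qed
    ultimately show "op {y, y + unitv i}" using \<beta>(2) y(3) unfolding good_def by blast
  qed
  then show ?thesis using \<beta>(2) qb by blast
qed

lemma ex_nonisolated:
  assumes sp: "sp z"
  shows "\<exists>q\<in>box b z. \<exists>q1. op {q, q1}"
proof -
  obtain j :: 'd where True by simp
  obtain i q where g: "good z i q" "q \<in> box b z"
    using L3[OF sp refl, of j] by blast
  let ?q' = "vupd q i (z$i)"
  have b1: "?q' \<in> box b z" using g(2) by (intro vupd_box) auto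
  have b2: "?q' + unitv i \<in> box b z" using g(2) b4 unfolding in_box by auto
  have "op {?q', ?q' + unitv i}" using g(1) b1 b2 unfolding good_def onl_def by auto
  then show ?thesis using b1 by blast
qed

end



definition dist1 :: "'d::finite site \<Rightarrow> 'd site \<Rightarrow> nat" where
  "dist1 z z' = (\<Sum>j\<in>UNIV. nat \<bar>z$j - z'$j\<bar>)"

context lat begin

lemma L4:
  assumes spall: "\<And>z. z \<in> box N 0 \<Longrightarrow> sp z"
    and z': "z' \<in> box N 0" "good z' i' p'" "p' \<in> box b z'"
  shows "z \<in> box N 0 \<Longrightarrow> good z i p \<Longrightarrow> p \<in> box b z \<Longrightarrow> conn p p'"
proof (induction "dist1 z z'" arbitrary: z i p rule: less_induct)
  case less
  show ?case
  proof (cases "z = z'")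
    case True
    then show ?thesis using L2[OF spall[OF less.prems(1)] less.prems(2) _ less.prems(3)] z' by blast
  next
    case False
    then obtain j where j: "z$j \<noteq> z'$j" by (auto simp: vec_eq_iff)
    define z'' where "z'' = vupd z j (if z$j < z'$j then z$j + 1 else z$j - 1)"
    have z''b: "z'' \<in> box N 0" unfolding in_box
    proof
      fix k show "\<bar>z''$k - 0$k\<bar> \<le> int N"
        using box_comp[OF less.prems(1), of k] box_comp[OF z'(1), of k] j
        by (cases "k = j") (auto simp: z''_def)
    qed
    have dlt: "dist1 z'' z' < dist1 z z'"
      unfolding dist1_def
    proof (rule sum_strict_mono_ex1)
      show "finite (UNIV :: 'd set)" by simp
      show "\<forall>x\<in>UNIV. nat \<bar>z'' $ x - z' $ x\<bar> \<le> nat \<bar>z $ x - z' $ x\<bar>"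
        using j by (auto simp: z''_def)
      show "\<exists>a\<in>UNIV. nat \<bar>z'' $ a - z' $ a\<bar> < nat \<bar>z $ a - z' $ a\<bar>"
        using j by (intro bexI[of _ j]) (auto simp: z''_def)
    qed
    obtain i0 q where q: "good z i0 q" "good z'' i0 q" "q \<in> box b z" "q \<in> box b z''"
    proof (cases "z$j < z'$j")
      case True
      then have "z'' = vupd z j (z$j + 1)" by (simp add: z''_def)
      then show ?thesis using L3[OF spall[OF less.prems(1)]] that by blast
    next
      case False
      then have "z = vupd z'' j (z''$j + 1)" by (auto simp: z''_def vec_eq_iff)
      then show ?thesis using L3[OF spall[OF z''b]] that by blast
    qed
    have "conn p q" using L2[OF spall[OF less.prems(1)] less.prems(2) q(1) less.prems(3) q(3)] .
    moreover have "conn q p'" using less.hyps[OF dlt z''b q(2) q(4)] .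
    ultimately show ?thesis using conn_trans by blast
  qed
qed

lemma iso_pair:
  assumes xy: "x \<noteq> y" "x \<in> box b z" "y \<in> box b z"
    and ix: "\<And>u. \<not> op {x,u}" and iy: "\<And>u. \<not> op {y,u}"
  shows "\<exists>z'. z' \<in> box b x \<and> \<not> sp z'"
proof -
  define lo where "lo j = min (x$j) (y$j)" for j
  define hi where "hi j = max (x$j) (y$j)" for j
  define lop where "lop j = (if x$j \<le> y$j then x else y)" for j
  define hip where "hip j = (if x$j \<le> y$j then y else x)" for j
  have gap: "hi j - lo j \<le> 2 * int b" for j
    using box_comp[OF xy(2), of j] box_comp[OF xy(3), of j] unfolding hi_def lo_def by arith
  define z' where "z' = (\<chi> j. if hi j - lo j < 2 * int b then lo j + int b - 1 else lo j + int b)"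
  have z'c: "z'$j = (if hi j - lo j < 2 * int b then lo j + int b - 1 else lo j + int b)" for j
    by (simp add: z'_def)
  define p where "p = (\<lambda>(j::'d, k::nat). if k = 0 then x else if k = 1 then y else
      if hi j - lo j < 2 * int b then lop j - unitv j else hip j - unitv j)"
  define h where "h = (\<lambda>(j::'d, k::nat). (p (j,k), j))"
  let ?A = "(UNIV :: 'd set) \<times> {0,1,2::nat}"
  have xb: "x \<in> box b z'" unfolding in_box
  proof
    fix j show "\<bar>x$j - z'$j\<bar> \<le> int b" using gap[of j] unfolding z'c lo_def hi_def by auto
  qed
  have yb: "y \<in> box b z'" unfolding in_box
  proof
    fix j show "\<bar>y$j - z'$j\<bar> \<le> int b" using gap[of j] unfolding z'c lo_def hi_def by auto
  qed
  have p2b: "p (j,2) \<in> box b z'" for j unfolding in_box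
  proof
    fix i show "\<bar>p (j,2) $ i - z'$i\<bar> \<le> int b"
    proof (cases "i = j")
      case True
      then show ?thesis using gap[of j] b4 unfolding z'c lo_def hi_def p_def lop_def hip_def by auto
    next
      case False
      then show ?thesis using box_comp[OF xb, of i] box_comp[OF yb, of i]
        unfolding p_def lop_def hip_def by auto
    qed
  qed
  have p2ne: "p (j,2) \<noteq> x \<and> p (j,2) \<noteq> y" for j
  proof -
    have "p (j,2) $ j \<noteq> x$j \<or> p (j,2) \<noteq> x" "p (j,2) $ j \<noteq> y$j \<or> p (j,2) \<noteq> y"
      using b4 unfolding p_def lop_def hip_def lo_def hi_def by (auto simp: vec_eq_iff)
    then show ?thesis by auto
  qed
  have "card ?A \<le> M" if spz: "sp z'"
  proof (rule CL[OF spz])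
    show "inj_on h ?A"
    proof (rule inj_onI)
      fix a a' assume a: "a \<in> ?A" "a' \<in> ?A" "h a = h a'"
      obtain j k where jk: "a = (j,k)" by (cases a)
      obtain j' k' where jk': "a' = (j',k')" by (cases a')
      have jj: "j = j'" and pp: "p (j,k) = p (j,k')" using a(3) unfolding jk jk' h_def by auto
      have "k = k'" using pp a(1,2) p2ne[of j] xy(1) unfolding jk jk' by (auto simp: p_def split: if_splits)
      then show "a = a'" using jj jk jk' by simp
    qed
  next
    fix a assume a: "a \<in> ?A"
    obtain j k where jk: "a = (j,k)" by (cases a)
    show "fst (h a) \<in> box b z' \<and> \<not> op {fst (h a), fst (h a) + unitv (snd (h a))}"
    proof (cases "k = 0 \<or> k = 1")
      case True
      then show ?thesis using xb yb ix iy unfolding jk h_def p_def by auto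
    next
      case False
      then have k2: "k = 2" using a jk by auto
      define m where "m = (if hi j - lo j < 2 * int b then lop j else hip j)"
      have pm: "p (j,k) = m - unitv j" unfolding k2 p_def m_def by simp
      have "m = x \<or> m = y" unfolding m_def lop_def hip_def by auto
      then have "\<not> op {m, m - unitv j}" using ix iy by auto
      then have "\<not> op {m - unitv j, m - unitv j + unitv j}" by (simp add: insert_commute)
      then show ?thesis using p2b[of j] unfolding jk h_def pm by (simp add: k2 pm[symmetric])
    qed
  qed simp
  moreover have "card ?A = 3 * CARD('d)" by (simp add: card_cartesian_product)
  ultimately have "\<not> sp z'" using M_def d2 by auto
  moreover have "z' \<in> box b x" unfolding in_box
  proof
    fix j show "\<bar>z'$j - x$j\<bar> \<le> int b" using gap[of j] unfolding z'c lo_def hi_def by auto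
  qed
  ultimately show ?thesis by blast
qed

end



lemma nn_neq: assumes "{y, u} \<in> (nn_edges :: 'd::finite site set set)" shows "y \<noteq> u"
proof
  assume yu: "y = u"
  obtain j where "u = y + unitv j \<or> y = u + unitv j" using nn_decode[OF assms] by blast
  then have "(y + unitv j) $ j = y $ j" using yu by auto
  then show False by simp
qed

lemma ex_max_fin: "finite L \<Longrightarrow> L \<noteq> {} \<Longrightarrow> \<exists>m\<in>L. \<forall>y\<in>L. (f y :: int) \<le> f m"
proof -
  assume "finite L" "L \<noteq> {}"
  then have "Max (f ` L) \<in> f ` L" by simp
  then obtain m where "m \<in> L" "f m = Max (f ` L)" by auto
  then show ?thesis using \<open>finite L\<close> by (metis Max_ge finite_imageI image_eqI)
qed

lemma ex_min_fin: "finite L \<Longrightarrow> L \<noteq> {} \<Longrightarrow> \<exists>m\<in>L. \<forall>y\<in>L. f m \<le> (f y :: int)"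
proof -
  assume "finite L" "L \<noteq> {}"
  then have "Min (f ` L) \<in> f ` L" by simp
  then obtain m where "m \<in> L" "f m = Min (f ` L)" by auto
  then show ?thesis using \<open>finite L\<close> by (metis Min_le finite_imageI image_eqI)
qed

context lat begin

lemma R_adj: assumes "(y,u) \<in> R" shows "\<bar>u$k - y$k\<bar> \<le> 1"
proof -
  have "{y,u} \<in> nn_edges" using assms op_nn by (simp add: R_def)
  then obtain j where "u = y + unitv j \<or> y = u + unitv j" using nn_decode by blast
  then show ?thesis by auto
qed

definition Rb where "Rb x = {(a,c). (a,c) \<in> R \<and> a \<in> box (b-1) x}"

lemma Rb_conn: "(x,y) \<in> (Rb x)\<^sup>* \<Longrightarrow> conn x y"
  by (rule rtrancl_mono[THEN subsetD, of "Rb x" R]) (auto simp: Rb_def)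

lemma exitl:
  assumes "(x,y) \<in> R\<^sup>*"
  shows "(x,y) \<in> (Rb x)\<^sup>* \<or> (\<exists>y'. (x,y') \<in> (Rb x)\<^sup>* \<and> y' \<notin> box (b-1) x)"
  using assms
proof (induction rule: rtrancl_induct)
  case base
  then show ?case by simp
next
  case (step y u)
  show ?case
  proof (cases "(x,y) \<in> (Rb x)\<^sup>* \<and> y \<in> box (b-1) x")
    case True
    then have "(y,u) \<in> Rb x" using step.hyps(2) by (simp add: Rb_def)
    then show ?thesis using True by (meson rtrancl_into_rtrancl)
  next
    case False
    then show ?thesis using step.IH by blast
  qed
qed

lemma levels:
  assumes "(x,y) \<in> (Rb x)\<^sup>*"
  shows "y \<in> box b x \<and> (\<forall>k t. (0 \<le> t \<and> t \<le> y$k - x$k \<or> y$k - x$k \<le> t \<and> t \<le> 0) \<longrightarrow>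
           (\<exists>y''. (x,y'') \<in> (Rb x)\<^sup>* \<and> y'' \<in> box b x \<and> y''$k - x$k = t))"
  using assms
proof (induction rule: rtrancl_induct)
  case base
  show ?case by (auto simp: in_box)
next
  case (step y u)
  have yb: "y \<in> box (b-1) x" and ru: "(y,u) \<in> R" using step.hyps(2) by (auto simp: Rb_def)
  have b1: "int (b-1) = int b - 1" using b4 by simp
  have ub: "u \<in> box b x" unfolding in_box
  proof
    fix k show "\<bar>u$k - x$k\<bar> \<le> int b"
      using box_comp[OF yb, of k] R_adj[OF ru, of k] b1 by arith
  qed
  have xu: "(x,u) \<in> (Rb x)\<^sup>*" using step.hyps by (meson rtrancl_into_rtrancl)
  show ?case
  proof (intro conjI ub allI impI)
    fix k t
    assume t: "0 \<le> t \<and> t \<le> u$k - x$k \<or> u$k - x$k \<le> t \<and> t \<le> 0"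
    show "\<exists>y''. (x,y'') \<in> (Rb x)\<^sup>* \<and> y'' \<in> box b x \<and> y''$k - x$k = t"
    proof (cases "0 \<le> t \<and> t \<le> y$k - x$k \<or> y$k - x$k \<le> t \<and> t \<le> 0")
      case True
      then show ?thesis using step.IH by blast
    next
      case False
      then have "t = u$k - x$k" using t R_adj[OF ru, of k] by arith
      then show ?thesis using xu ub by blast
    qed
  qed
qed

lemma caseA:
  assumes sp: "sp x" and y: "conn x y" "y \<notin> box (b-1) x"
  shows "\<exists>i q. good x i q \<and> q \<in> box b x \<and> conn x q"
proof -
  obtain y' where y': "(x,y') \<in> (Rb x)\<^sup>*" "y' \<notin> box (b-1) x"
    using exitl[OF y(1)] y(2) by blast
  note LV = levels[OF y'(1)]
  have b1: "int (b-1) = int b - 1" using b4 by simp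
  obtain k where k: "\<bar>y'$k - x$k\<bar> > int (b-1)" using y'(2) by (auto simp: in_box not_le)
  have kb: "\<bar>y'$k - x$k\<bar> = int b" using k box_comp[OF conjunct1[OF LV], of k] b1 by arith
  define \<sigma> :: int where "\<sigma> = (if y'$k - x$k \<ge> 0 then 1 else -1)"
  have "\<forall>t\<in>{0..b}. \<exists>y''. (x,y'') \<in> (Rb x)\<^sup>* \<and> y'' \<in> box b x \<and> y''$k - x$k = \<sigma> * int t"
  proof
    fix t assume "t \<in> {0..b}"
    then have "int t \<le> int b" by simp
    then have "0 \<le> \<sigma> * int t \<and> \<sigma> * int t \<le> y'$k - x$k \<or> y'$k - x$k \<le> \<sigma> * int t \<and> \<sigma> * int t \<le> 0"
      using kb unfolding \<sigma>_def by auto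
    then show "\<exists>y''. (x,y'') \<in> (Rb x)\<^sup>* \<and> y'' \<in> box b x \<and> y''$k - x$k = \<sigma> * int t"
      using LV by blast
  qed
  then obtain \<pi> where \<pi>: "\<And>t. t \<in> {0..b} \<Longrightarrow> (x,\<pi> t) \<in> (Rb x)\<^sup>* \<and> \<pi> t \<in> box b x \<and> \<pi> t $k - x$k = \<sigma> * int t"
    by metis
  define A where "A = ((UNIV - {k}) \<times> {0..b}) \<union> {(k,0)}"
  define F where "F = (\<lambda>(j,t). {(j, if j = k then x else \<pi> t)})"
  have finA: "finite A" by (simp add: A_def)
  have cA: "card A = (CARD('d) - 1) * (b+1) + 1"
  proof -
    have "card ((UNIV - {k}) \<times> {0..b}) = (CARD('d) - 1) * (b+1)"
      by (simp add: card_cartesian_product)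
    moreover have "((UNIV - {k}) \<times> {0..b}) \<inter> {(k,0)} = {}" by auto
    ultimately show ?thesis unfolding A_def by (subst card_Un_disjoint) auto
  qed
  have "M < card A"
  proof -
    obtain e where e: "CARD('d) = e + 2" using d2 by (metis add.commute le_iff_add)
    have "(e+1) * (2*(e+2)+1) \<le> (e+1) * (b+1)" using bge e by (intro mult_le_mono2) simp
    then show ?thesis unfolding cA M_def e by (simp add: algebra_simps)
  qed
  have "\<exists>a\<in>A. \<forall>(i,q)\<in>F a. good x i q"
  proof (rule GL[OF sp finA \<open>M < card A\<close>])
    fix a a' i q q' y
    assume h: "a \<in> A" "a' \<in> A" "(i,q) \<in> F a" "(i,q') \<in> F a'" "onl i q y" "onl i q' y"
    obtain j t where a: "a = (j,t)" by (cases a)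
    obtain j' t' where a': "a' = (j',t')" by (cases a')
    have jj: "i = j" "i = j'" and qq: "q = (if j = k then x else \<pi> t)" "q' = (if j' = k then x else \<pi> t')"
      using h(3,4) unfolding a a' F_def by auto
    show "a = a'"
    proof (cases "j = k")
      case True
      then show ?thesis using h(1,2) jj unfolding a a' A_def by auto
    next
      case False
      have tt: "t \<in> {0..b}" "t' \<in> {0..b}" using h(1,2) False jj unfolding a a' A_def by auto
      have "y$k = q$k" "y$k = q'$k" using h(5,6) False jj unfolding onl_def by metis+
      then have "\<sigma> * int t = \<sigma> * int t'" using \<pi>[OF tt(1)] \<pi>[OF tt(2)] False jj qq by auto
      then have "t = t'" unfolding \<sigma>_def by (auto split: if_splits)
      then show ?thesis using jj a a' by simp
    qed
  qed
  then obtain j t where jt: "(j,t) \<in> A" "good x j (if j = k then x else \<pi> t)"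
    unfolding F_def by auto
  show ?thesis
  proof (cases "j = k")
    case True
    then show ?thesis using jt(2) by (intro exI[of _ j] exI[of _ x]) (auto simp: in_box)
  next
    case False
    then have "t \<in> {0..b}" using jt(1) by (auto simp: A_def)
    then show ?thesis using jt(2) False \<pi> Rb_conn by (intro exI[of _ j] exI[of _ "\<pi> t"]) auto
  qed
qed

end



context lat begin

lemma b1i: "int (b-1) = int b - 1" using b4 by simp

lemma box_mono1: assumes "y \<in> box (b-1) x" shows "y \<in> box b x"
  unfolding in_box
proof
  fix i have "\<bar>y$i - x$i\<bar> \<le> int (b-1)" using assms by (simp add: in_box)
  then show "\<bar>y$i - x$i\<bar> \<le> int b" using b1i by linarith
qed

lemma caseB:
  assumes sp: "sp x" and ni: "op {x, x1}" and Ssub: "{y. conn x y} \<subseteq> box (b-1) x"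
  shows False
proof -
  define S where "S = {y. conn x y}"
  have finS: "finite S" using Ssub finite_box unfolding S_def by (metis finite_subset)
  have xS: "x \<in> S" and x1S: "x1 \<in> S" using conn_edge[OF ni] by (auto simp: S_def)
  have "x \<noteq> x1" using nn_neq op_nn[OF ni] by blast
  then obtain a where a: "x$a \<noteq> x1$a" by (auto simp: vec_eq_iff)
  define W where "W w = (if w then x1 else x)" for w
  define Ls where "Ls j w = {y \<in> S. onl j (W w) y}" for j w
  have finL: "finite (Ls j w)" for j w using finS by (simp add: Ls_def)
  have neL: "W w \<in> Ls j w" for j w using xS x1S by (simp add: Ls_def W_def)
  have "\<forall>j w. \<exists>m. m \<in> Ls j w \<and> (\<forall>y\<in>Ls j w. y$j \<le> m$j)"
  proof (intro allI)
    fix j w show "\<exists>m. m \<in> Ls j w \<and> (\<forall>y\<in>Ls j w. y$j \<le> m$j)"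
      using ex_max_fin[of "Ls j w" "\<lambda>y. y$j"] finL[of j w] neL[of w j] by blast
  qed
  then obtain mx where mx: "\<And>j w. mx j w \<in> Ls j w \<and> (\<forall>y\<in>Ls j w. y$j \<le> mx j w $j)"
    by metis
  have "\<forall>j w. \<exists>m. m \<in> Ls j w \<and> (\<forall>y\<in>Ls j w. m$j \<le> y$j)"
  proof (intro allI)
    fix j w show "\<exists>m. m \<in> Ls j w \<and> (\<forall>y\<in>Ls j w. m$j \<le> y$j)"
      using ex_min_fin[of "Ls j w" "\<lambda>y. y$j"] finL[of j w] neL[of w j] by blast
  qed
  then obtain mn where mn: "\<And>j w. mn j w \<in> Ls j w \<and> (\<forall>y\<in>Ls j w. mn j w $j \<le> y$j)"
    by metis
  have mxL: "mx j w \<in> Ls j w" and mxM: "\<And>y. y \<in> Ls j w \<Longrightarrow> y$j \<le> mx j w $ j" for j w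
    using mx[of j w] by auto
  have mnL: "mn j w \<in> Ls j w" and mnM: "\<And>y. y \<in> Ls j w \<Longrightarrow> mn j w $ j \<le> y$j" for j w
    using mn[of j w] by auto
  have connS: "u \<in> S \<Longrightarrow> conn u v \<Longrightarrow> v \<in> S" for u v unfolding S_def using conn_trans by blast
  have up: "\<not> op {mx j w, mx j w + unitv j}" for j w
  proof
    assume h: "op {mx j w, mx j w + unitv j}"
    have "mx j w \<in> S" using mxL by (simp add: Ls_def)
    then have "mx j w + unitv j \<in> S" using connS conn_edge[OF h] by blast
    moreover have "onl j (W w) (mx j w + unitv j)" using mxL by (auto simp: Ls_def onl_def)
    ultimately have "mx j w + unitv j \<in> Ls j w" by (simp add: Ls_def)
    then have "(mx j w + unitv j) $ j \<le> mx j w $ j" by (rule mxM)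
    then show False by simp
  qed
  have dnS: "mn j w - unitv j \<notin> S" for j w
  proof
    assume "mn j w - unitv j \<in> S"
    moreover have "onl j (W w) (mn j w - unitv j)" using mnL by (auto simp: Ls_def onl_def)
    ultimately have "mn j w - unitv j \<in> Ls j w" by (simp add: Ls_def)
    then have "mn j w $ j \<le> (mn j w - unitv j) $ j" by (rule mnM)
    then show False by simp
  qed
  have dn: "\<not> op {mn j w - unitv j, mn j w - unitv j + unitv j}" for j w
  proof
    assume "op {mn j w - unitv j, mn j w - unitv j + unitv j}"
    then have "conn (mn j w) (mn j w - unitv j)" using conn_edge' by simp
    then have "mn j w - unitv j \<in> S" using connS mnL by (auto simp: Ls_def)
    then show False using dnS by blast
  qed
  have inbox: "y \<in> S \<Longrightarrow> y \<in> box b x" for y using Ssub box_mono1 unfolding S_def by blast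
  have dnbox: "mn j w - unitv j \<in> box b x" for j w
  proof -
    have "mn j w \<in> box (b-1) x" using mnL Ssub by (auto simp: Ls_def S_def)
    then have h: "\<bar>mn j w $ i - x$i\<bar> \<le> int b - 1" for i using b1i by (simp add: in_box)
    show ?thesis unfolding in_box
    proof
      fix i show "\<bar>(mn j w - unitv j) $ i - x$i\<bar> \<le> int b" using h[of i] by auto
    qed
  qed
  define A :: "('d \<times> bool \<times> bool) set" where "A = UNIV - {(a,False,True), (a,True,True)}"
  define h where "h = (\<lambda>(j,s,w). if s then (mx j w, j) else (mn j w - unitv j, j))"
  have "card A \<le> M"
  proof (rule CL[OF sp])
    show "finite A" by simp
  next
    fix q assume "q \<in> A"
    obtain j s w where q: "q = (j,s,w)" by (cases q) auto
    show "fst (h q) \<in> box b x \<and> \<not> op {fst (h q), fst (h q) + unitv (snd (h q))}"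
      using up dn dnbox inbox mxL unfolding q h_def by (auto simp: Ls_def)
  next
    show "inj_on h A"
    proof (rule inj_onI)
      fix q q' assume qq: "q \<in> A" "q' \<in> A" "h q = h q'"
      obtain j s w where q: "q = (j,s,w)" by (cases q) auto
      obtain j' s' w' where q': "q' = (j',s',w')" by (cases q') auto
      have jj: "j' = j" using qq(3) unfolding q q' h_def by (auto split: if_splits)
      have lines: "j \<noteq> a" if "w \<noteq> w'" using qq(1,2) that unfolding q q' jj A_def by (cases w) auto
      have same_line: "w = w'" if "m \<in> Ls j w" "m \<in> Ls j w'" for m
      proof (rule ccontr)
        assume "w \<noteq> w'"
        then have ja: "j \<noteq> a" by (rule lines)
        have "m$a = W w $a" "m$a = W w' $a" using that ja by (auto simp: Ls_def onl_def)
        then show False using \<open>w \<noteq> w'\<close> a by (auto simp: W_def split: if_splits)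
      qed
      show "q = q'"
      proof (cases s; cases s')
        assume "s" "s'"
        then have "mx j w = mx j w'" using qq(3) unfolding q q' jj h_def by simp
        then have "w = w'" using same_line mxL by metis
        then show ?thesis using q q' jj \<open>s\<close> \<open>s'\<close> by simp
      next
        assume "\<not> s" "\<not> s'"
        then have "mn j w = mn j w'" using qq(3) unfolding q q' jj h_def by simp
        then have "w = w'" using same_line mnL by metis
        then show ?thesis using q q' jj \<open>\<not> s\<close> \<open>\<not> s'\<close> by simp
      next
        assume "s" "\<not> s'"
        then have e: "mx j w = mn j w' - unitv j" using qq(3) unfolding q q' jj h_def by simp
        have "mn j w' - unitv j \<in> S" using mxL[of j w] unfolding e by (simp add: Ls_def)
        then show ?thesis using dnS by blast
      next
        assume "\<not> s" "s'"
        then have e: "mx j w' = mn j w - unitv j" using qq(3) unfolding q q' jj h_def by simp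
        have "mn j w - unitv j \<in> S" using mxL[of j w'] unfolding e by (simp add: Ls_def)
        then show ?thesis using dnS by blast
      qed
    qed
  qed
  moreover have "card A = 4 * CARD('d) - 2"
  proof -
    have "card (UNIV :: ('d \<times> bool \<times> bool) set) = CARD('d) * 4"
      by (simp add: card_cartesian_product flip: UNIV_Times_UNIV)
    then show ?thesis unfolding A_def by (subst card_Diff_subset) auto
  qed
  ultimately show False using d2 unfolding M_def by linarith
qed

lemma L1:
  assumes sp: "sp x" and ni: "op {x, x1}"
  shows "\<exists>i q. good x i q \<and> q \<in> box b x \<and> conn x q"
proof (cases "{y. conn x y} \<subseteq> box (b-1) x")
  case True
  then show ?thesis using caseB[OF sp ni] by blast
next
  case False
  then obtain y where "conn x y" "y \<notin> box (b-1) x" by blast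
  then show ?thesis using caseA[OF sp] by blast
qed

lemma Lmain:
  assumes spall: "\<And>z. z \<in> box N 0 \<Longrightarrow> sp z"
    and x: "x \<in> box N 0" "op {x, x1}" and y: "y \<in> box N 0" "op {y, y1}"
  shows "conn x y"
proof -
  obtain i p where p: "good x i p" "p \<in> box b x" "conn x p" using L1[OF spall[OF x(1)] x(2)] by blast
  obtain i' p' where p': "good y i' p'" "p' \<in> box b y" "conn y p'" using L1[OF spall[OF y(1)] y(2)] by blast
  have "conn p p'" using L4[OF spall y(1) p'(1) p'(2) x(1) p(1) p(2)] .
  then show ?thesis using p(3) p'(3) conn_trans conn_sym by blast
qed

end



lemma lat_inst:
  assumes "CARD('d) \<ge> 2" "b \<ge> 2*CARD('d)"
  shows "lat (open_edge w g eps n :: 'd::finite site set \<Rightarrow> bool) b"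
  by unfold_locales (auto simp: open_edge_def assms)

lemma R_eq:
  assumes "CARD('d) \<ge> 2" "b \<ge> 2*CARD('d)"
  shows "lat.R (open_edge w g eps n :: 'd::finite site set \<Rightarrow> bool) = open_adj w g eps n"
  by (simp add: lat.R_def[OF lat_inst[OF assms]] open_adj_def)

lemma sp_eq:
  assumes d: "CARD('d) \<ge> 2" "b \<ge> 2*CARD('d)"
  and "card {e \<in> edges_of (box b z). w e \<le> g (real n powr (1 - eps))} \<le> 3 * CARD('d) - 1"
  shows "lat.sp (open_edge w g eps n) b (z::'d::finite site)"
proof -
  have "{e \<in> edges_of (box b z). \<not> open_edge w g eps n e} = {e \<in> edges_of (box b z). w e \<le> g (real n powr (1 - eps))}"
    by (auto simp: open_edge_def edges_of_def nn_edges_def)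
  then show ?thesis using assms by (simp add: lat.sp_def[OF lat_inst[OF d]] lat.M_def[OF lat_inst[OF d]])
qed

lemma box_mono: "m \<le> m' \<Longrightarrow> box m z \<subseteq> box m' z"
  by (auto simp: in_box) (meson of_nat_le_iff order_trans)

lemma ex_box: "\<exists>K. (u::'d::finite site) \<in> box K 0"
proof -
  let ?K = "nat (Max (range (\<lambda>i. \<bar>u$i\<bar>)))"
  have h: "\<bar>u$i\<bar> \<le> Max (range (\<lambda>i. \<bar>u$i\<bar>))" for i by (rule Max_ge) auto
  have m0: "0 \<le> Max (range (\<lambda>i. \<bar>u$i\<bar>))" using h abs_ge_zero order_trans by blast
  then have "int ?K = Max (range (\<lambda>i. \<bar>u$i\<bar>))" by simp
  then have "\<bar>u$i\<bar> \<le> int ?K" for i using h[of i] by simp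
  then have "u \<in> box ?K 0" by (auto simp: in_box)
  then show ?thesis by blast
qed

lemma finite_bounded: "finite (K::'d::finite site set) \<Longrightarrow> \<exists>R. K \<subseteq> box R 0"
proof (induction K rule: finite_induct)
  case empty then show ?case by simp
next
  case (insert u K)
  then obtain R where R: "K \<subseteq> box R 0" by blast
  obtain R' where R': "u \<in> box R' 0" using ex_box by blast
  have "insert u K \<subseteq> box (max R R') 0"
    using R R' box_mono[of R "max R R'" 0] box_mono[of R' "max R R'" 0] by auto
  then show ?case by blast
qed




lemma box_tri: assumes "x \<in> box n 0" "z \<in> box b x" shows "z \<in> box (n + b) (0::'d::finite site)"
  unfolding in_box
proof
  fix i
  have "\<bar>x$i\<bar> \<le> int n" "\<bar>z$i - x$i\<bar> \<le> int b" using assms by (auto simp: in_box)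
  then show "\<bar>z$i - 0$i\<bar> \<le> int (n+b)" using abs_triangle_ineq[of "z$i - x$i" "x$i"] by simp
qed

theorem lemma4p4:
  fixes w :: "'d::finite site set \<Rightarrow> real" and g :: "real \<Rightarrow> real"
    and b :: nat and eps :: real
  assumes d2: "CARD('d) \<ge> 2"
    and b_ge: "b \<ge> 2 * CARD('d)"
    and eps_pos: "eps > 0"
    and g_pos: "\<And>t. t > 0 \<Longrightarrow> g t > 0"
    and g_dec: "\<And>s t. 0 < s \<Longrightarrow> s \<le> t \<Longrightarrow> g t \<le> g s"
    and g_lim: "(g \<longlongrightarrow> 0) at_top"
    and w_pos: "\<And>e. e \<in> nn_edges \<Longrightarrow> w e > 0"
    and H: "eventually (\<lambda>n.
              (\<forall>z \<in> box (n + b) 0.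
                 card {e \<in> edges_of (box b z). w e \<le> g (real n powr (1 - eps))} \<le> 3 * CARD('d) - 1)
            \<and> (\<exists>!C. C \<in> infinite_clusters w g eps n)) sequentially"
  shows "eventually (\<lambda>n. sparse b (box n 0 - Dcl w g eps n)) sequentially"
proof -
  note LI = lat_inst[OF d2 b_ge]
  note Req = R_eq[OF d2 b_ge]
  have LIn: "lat (open_edge w g eps n :: 'd site set \<Rightarrow> bool) b" for n by (rule LI)
  obtain N0 where N0: "\<And>n. n \<ge> N0 \<Longrightarrow> (\<forall>z \<in> box (n + b) 0.
                 card {e \<in> edges_of (box b z). w e \<le> g (real n powr (1 - eps))} \<le> 3 * CARD('d) - 1)
            \<and> (\<exists>!C. C \<in> infinite_clusters w g eps n)"
    using H unfolding eventually_sequentially by blast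
  have spn: "lat.sp (open_edge w g eps n) b z" if "n \<ge> N0" "z \<in> box (n+b) 0" for n z
  proof -
    have c: "card {e \<in> edges_of (box b z). w e \<le> g (real n powr (1 - eps))} \<le> 3 * CARD('d) - 1"
      using N0[OF that(1)] that(2) by blast
    show ?thesis by (rule sp_eq[where w=w and g=g and n=n and eps=eps and z=z, OF d2 b_ge c])
  qed
  have spall: "lat.sp (open_edge w g eps n) b z" if "n \<ge> N0" "z \<in> box n 0" for n z
    using spn[OF that(1)] that(2) box_mono[of n "n+b" 0] by auto
  have Dn: "Dcl w g eps n \<in> infinite_clusters w g eps n" if "n \<ge> N0" for n
    unfolding Dcl_def by (rule theI') (use N0[OF that] in blast)
  have Duniq: "C = Dcl w g eps n" if "n \<ge> N0" "C \<in> infinite_clusters w g eps n" for n C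
    using N0[OF that(1)] that(2) Dn[OF that(1)] by blast
  have inD: "x \<in> Dcl w g eps n" if "n \<ge> N0" "infinite (cluster w g eps n x)" for n x
  proof -
    have "cluster w g eps n x \<in> infinite_clusters w g eps n"
      using that(2) unfolding infinite_clusters_def by blast
    then have "cluster w g eps n x = Dcl w g eps n" using Duniq[OF that(1)] by blast
    moreover have "x \<in> cluster w g eps n x" by (simp add: cluster_def)
    ultimately show ?thesis by simp
  qed
  have closeD: "y \<in> Dcl w g eps n" if h: "n \<ge> N0" "x \<in> Dcl w g eps n" "(x,y) \<in> (open_adj w g eps n)\<^sup>*" for n x y
  proof -
    obtain v where v: "Dcl w g eps n = cluster w g eps n v" using Dn[OF h(1)] unfolding infinite_clusters_def by blast
    then have "(v,x) \<in> (open_adj w g eps n)\<^sup>*" using h(2) by (simp add: cluster_def)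
    then have "(v,y) \<in> (open_adj w g eps n)\<^sup>*" using h(3) by simp
    then show ?thesis using v by (simp add: cluster_def)
  qed
  have csym: "(y,x) \<in> (open_adj w g eps n)\<^sup>*" if "(x,y) \<in> (open_adj w g eps n)\<^sup>*" for n x y
    using lat.conn_sym[OF LIn[of n]] that unfolding Req by blast
  have Lm: "(x,y) \<in> (open_adj w g eps n)\<^sup>*"
    if "n \<ge> N0" "x \<in> box n 0" "open_edge w g eps n {x,x1}" "y \<in> box n 0" "open_edge w g eps n {y,y1}" for n x x1 y y1
    using lat.Lmain[OF LIn[of n] spall[OF that(1)] that(2,3,4,5)] unfolding Req .
  have main: "\<exists>N1\<ge>N0. \<forall>n\<ge>N1. \<forall>x x1. x \<in> box n 0 \<longrightarrow> open_edge w g eps n {x,x1} \<longrightarrow> x \<in> Dcl w g eps n"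
  proof (cases "eps < 1")
    case True
    have mono: "open_edge w g eps n e" if "1 \<le> m" "m \<le> n" "open_edge w g eps m e" for m n e
    proof -
      have "0 < real m powr (1 - eps)" using that(1) by simp
      moreover have "real m powr (1 - eps) \<le> real n powr (1 - eps)"
        using that(1,2) True by (intro powr_mono2) auto
      ultimately have "g (real n powr (1 - eps)) \<le> g (real m powr (1 - eps))" by (rule g_dec)
      then show ?thesis using that(3) by (auto simp: open_edge_def)
    qed
    have cmono: "(x,y) \<in> (open_adj w g eps n)\<^sup>*" if "1 \<le> m" "m \<le> n" "(x,y) \<in> (open_adj w g eps m)\<^sup>*" for m n x y
    proof -
      have "open_adj w g eps m \<subseteq> open_adj w g eps n" using mono[OF that(1,2)] by (auto simp: open_adj_def)
      then show ?thesis using that(3) rtrancl_mono by blast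
    qed
    define N where "N = max N0 1"
    have NN: "N \<ge> N0" "N \<ge> 1" by (auto simp: N_def)
    have infD: "infinite (Dcl w g eps N)" using Dn[OF NN(1)] unfolding infinite_clusters_def by blast
    then obtain u0 where u0: "u0 \<in> Dcl w g eps N" by (metis finite.emptyI ex_in_conv)
    obtain v where v: "Dcl w g eps N = cluster w g eps N v" using Dn[OF NN(1)] unfolding infinite_clusters_def by blast
    have vu: "(u0,v) \<in> (open_adj w g eps N)\<^sup>*" using u0 v csym by (simp add: cluster_def)
    have sub: "Dcl w g eps N \<subseteq> cluster w g eps n u0" if "n \<ge> N" for n
    proof
      fix y assume "y \<in> Dcl w g eps N"
      then have "(v,y) \<in> (open_adj w g eps N)\<^sup>*" using v by (simp add: cluster_def)
      then have "(u0,y) \<in> (open_adj w g eps N)\<^sup>*" using vu by simp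
      then show "y \<in> cluster w g eps n u0" using cmono[OF NN(2) that] by (simp add: cluster_def)
    qed
    have u0D: "u0 \<in> Dcl w g eps n" and u0ni: "\<exists>z. open_edge w g eps n {u0,z}" if "n \<ge> N" for n
    proof -
      have inf: "infinite (cluster w g eps n u0)" using sub[OF that] infD finite_subset by blast
      then show "u0 \<in> Dcl w g eps n" using inD NN that by simp
      obtain y where y: "y \<in> cluster w g eps n u0" "y \<noteq> u0"
        using inf by (metis finite_insert infinite_imp_nonempty insertI1 finite.emptyI subsetI infinite_super
            Diff_infinite_finite finite_Diff2 Diff_iff singletonI ex_in_conv)
      then have "(u0,y) \<in> (open_adj w g eps n)\<^sup>*" by (simp add: cluster_def)
      then obtain z where "(u0,z) \<in> open_adj w g eps n" using y(2) by (metis converse_rtranclE)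
      then show "\<exists>z. open_edge w g eps n {u0,z}" by (auto simp: open_adj_def)
    qed
    obtain K0 where K0: "u0 \<in> box K0 0" using ex_box by blast
    define N1 where "N1 = max N K0"
    show ?thesis
    proof (intro exI[of _ N1] conjI allI impI)
      show "N0 \<le> N1" using NN by (simp add: N1_def)
      fix n x x1 assume n: "N1 \<le> n" and x: "x \<in> box n 0" "open_edge w g eps n {x,x1}"
      have nN: "n \<ge> N" "n \<ge> N0" using n NN by (auto simp: N1_def)
      have "u0 \<in> box n 0" using K0 box_mono[of K0 n 0] n by (auto simp: N1_def)
      moreover obtain z where "open_edge w g eps n {u0,z}" using u0ni[OF nN(1)] by blast
      ultimately have "(u0,x) \<in> (open_adj w g eps n)\<^sup>*" using Lm[OF nN(2)] x by blast
      then show "x \<in> Dcl w g eps n" using closeD[OF nN(2) u0D[OF nN(1)]] by blast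
    qed
  next
    case False
    have mono: "open_edge w g eps m e" if "1 \<le> m" "m \<le> n" "open_edge w g eps n e" for m n e
    proof -
      have "0 < real n powr (1 - eps)" using that(1,2) by simp
      moreover have "real n powr (1 - eps) \<le> real m powr (1 - eps)"
        using that(1,2) False by (intro powr_mono2') auto
      ultimately have "g (real m powr (1 - eps)) \<le> g (real n powr (1 - eps))" by (rule g_dec)
      then show ?thesis using that(3) by (auto simp: open_edge_def)
    qed
    have cmono: "(x,y) \<in> (open_adj w g eps m)\<^sup>*" if "1 \<le> m" "m \<le> n" "(x,y) \<in> (open_adj w g eps n)\<^sup>*" for m n x y
    proof -
      have "open_adj w g eps n \<subseteq> open_adj w g eps m" using mono[OF that(1,2)] by (auto simp: open_adj_def)
      then show ?thesis using that(3) rtrancl_mono by blast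
    qed
    define N1 where "N1 = max N0 (max 1 b)"
    show ?thesis
    proof (intro exI[of _ N1] conjI allI impI)
      show "N0 \<le> N1" by (simp add: N1_def)
      fix n x x1 assume n: "N1 \<le> n" and x: "x \<in> box n 0" "open_edge w g eps n {x,x1}"
      have nN: "n \<ge> N0" "n \<ge> 1" "n \<ge> b" using n by (auto simp: N1_def)
      show "x \<in> Dcl w g eps n"
      proof (rule ccontr)
        assume xD: "x \<notin> Dcl w g eps n"
        let ?K = "cluster w g eps n x"
        have finK: "finite ?K" using inD[OF nN(1)] xD by blast
        obtain Rk where Rk: "?K \<subseteq> box Rk 0" using finite_bounded[OF finK] by blast
        define n' where "n' = n + Rk + 2*b + 1"
        have n': "n' \<ge> N0" "n' \<ge> n" "n \<ge> 1" using nN by (auto simp: n'_def)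
        have "(0::'d site) \<in> box (n'+b) 0" by (simp add: in_box)
        then obtain s s1 where s: "s \<in> box b 0" "open_edge w g eps n' {s,s1}"
          using lat.ex_nonisolated[OF LIn[of n'] spn[OF n'(1)]] by blast
        have sn: "s \<in> box n 0" using s(1) box_mono[of b n 0] nN by auto
        have "open_edge w g eps n {s,s1}" using mono[OF n'(3) n'(2) s(2)] .
        then have "(x,s) \<in> (open_adj w g eps n)\<^sup>*" using Lm[OF nN(1) x sn] by blast
        then have sK: "s \<in> ?K" by (simp add: cluster_def)
        obtain j0 :: 'd where True by simp
        define zv where "zv = vupd 0 j0 (int (Rk + b + 1))"
        have "zv \<in> box (n'+b) 0" unfolding in_box zv_def n'_def by auto
        then obtain v v1 where v: "v \<in> box b zv" "open_edge w g eps n' {v,v1}"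
          using lat.ex_nonisolated[OF LIn[of n'] spn[OF n'(1)]] by blast
        have vj: "\<bar>v$j0 - int (Rk + b + 1)\<bar> \<le> int b" using v(1) unfolding in_box zv_def by (metis vupd_comp)
        have vo: "\<bar>v$i\<bar> \<le> int b" if "i \<noteq> j0" for i using v(1) that unfolding in_box zv_def by (metis vupd_comp diff_zero zero_index)
        have vn': "v \<in> box n' 0" unfolding in_box
        proof
          fix i show "\<bar>v$i - 0$i\<bar> \<le> int n'"
            using vj vo[of i] unfolding n'_def by (cases "i = j0") auto
        qed
        have vK: "v \<notin> box Rk 0" using vj unfolding in_box by (auto intro!: exI[of _ j0])
        have sn': "s \<in> box n' 0" using s(1) box_mono[of b n' 0] n' nN by auto
        have "(s,v) \<in> (open_adj w g eps n')\<^sup>*" using Lm[OF n'(1) sn' s(2) vn' v(2)] .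
        then have "(s,v) \<in> (open_adj w g eps n)\<^sup>*" using cmono[OF n'(3) n'(2)] by blast
        then have "v \<in> ?K" using sK by (simp add: cluster_def)
        then show False using vK Rk by blast
      qed
    qed
  qed
  then obtain N1 where N1: "N1 \<ge> N0" "\<And>n x x1. n \<ge> N1 \<Longrightarrow> x \<in> box n 0 \<Longrightarrow> open_edge w g eps n {x,x1} \<Longrightarrow> x \<in> Dcl w g eps n"
    by blast
  show ?thesis
    unfolding eventually_sequentially
  proof (intro exI[of _ N1] allI impI)
    fix n assume n: "N1 \<le> n"
    have nN: "n \<ge> N0" using n N1(1) by simp
    show "sparse b (box n 0 - Dcl w g eps n)"
      unfolding sparse_def
    proof
      fix z
      let ?I = "box b z \<inter> (box n 0 - Dcl w g eps n)"
      have fin: "finite ?I" using finite_box[of b z] by (rule finite_subset[rotated]) auto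
      have "\<forall>a1\<in>?I. \<forall>a2\<in>?I. a1 = a2"
      proof (intro ballI, rule ccontr)
        fix a1 a2 assume a: "a1 \<in> ?I" "a2 \<in> ?I" "a1 \<noteq> a2"
        have iso1: "\<not> open_edge w g eps n {a1,u}" for u using a(1) N1(2)[OF n] by blast
        have iso2: "\<not> open_edge w g eps n {a2,u}" for u using a(2) N1(2)[OF n] by blast
        obtain z' where z': "z' \<in> box b a1" "\<not> lat.sp (open_edge w g eps n) b z'"
          using lat.iso_pair[OF LIn[of n] a(3) _ _ iso1 iso2] a(1,2) by blast
        have "z' \<in> box (n+b) 0" using box_tri[of a1 n z'] a(1) z'(1) by blast
        then show False using spn[OF nN] z'(2) by blast
      qed
      then have "card ?I \<le> Suc 0" using card_le_Suc0_iff_eq[OF fin] by blast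
      then show "card ?I \<le> 1" by simp
    qed
  qed
qed



end
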